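(* Let $d,n\ge 1$ and let $\mathfrak{m}(d)=\{m_{j_1,\dots,j_{d+1}}\}_{j_1,\dots,j_{d+1}=1}^n$ be a real multi-dimensional array, not identically zero. Let $X_1,\dots,X_d$ be random $n\times n$ real matrices (entries possibly dependent), and write $X^{(k)}_{ij}$ for the $(i,j)$ entry of $X_k$. Let $f\in\mathcal{B}_c$ and suppose $$P\big(|X^{(k)}_{ij}|\ge u\big)\le f(u)\quad\text{for all } u\ge 0 \text{ and all } i,j\in\{1,\dots,n\},\ k\in\{1,\dots,d\}.$$ Then for all $t\ge 0$, $$P\Big(\big|\operatorname{Tr}\big(\mathfrak{M}_{\mathfrak{m}(d)}(X_1,\dots,X_d)\big)\big|\ge t\Big)\le d n^2\, f\!\left(\frac{t^{1/d}}{\|\mathfrak{m}(d)\|_1^{1/d}}\right).$$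
   Context: $\mathcal{B}_c$ is the set of functions $f:[0,\infty)\to(0,\infty)$ that are continuous, strictly decreasing, satisfy $f(0)\ge 1$ and $\lim_{u\to\infty}f(u)=0$. For $n\times n$ real matrices $Y_1,\dots,Y_d$ with entries $y^{(k)}_{ij}$, the $d$-linear Schur multiplier is $\mathfrak{M}_{\mathfrak{m}(d)}(Y_1,\dots,Y_d)=\sum_{j_1,\dots,j_{d+1}=1}^n m_{j_1,\dots,j_{d+1}}\, y^{(1)}_{j_1,j_2}\cdots y^{(d)}_{j_d,j_{d+1}}\,E_{j_1,j_{d+1}}$, where $E_{i,j}$ is the elementary matrix with a $1$ in position $(i,j)$ and zeros elsewhere. $\|\mathfrak{m}(d)\|_1=\sum_{j_1,\dots,j_{d+1}}|m_{j_1,\dots,j_{d+1}}|$. *)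

theory Defs
  imports "HOL-Probability.Probability"
begin

definition B_c :: "(real \<Rightarrow> real) \<Rightarrow> bool" where
  "B_c f \<longleftrightarrow> continuous_on {0..} f
     \<and> (\<forall>u\<ge>0. f u > 0)
     \<and> (\<forall>u v. 0 \<le> u \<and> u < v \<longrightarrow> f v < f u)
     \<and> f 0 \<ge> 1
     \<and> (f \<longlongrightarrow> 0) at_top"

definition multi_indices :: "nat \<Rightarrow> nat \<Rightarrow> (nat \<Rightarrow> nat) set" where
  "multi_indices d n = PiE {1..d+1} (\<lambda>_. {1..n})"

text \<open>The d-linear Schur multiplier; matrices are functions nat => nat => real with
  indices in {1..n}; Y k is the k-th matrix. Result: entry (a,b).\<close>
definition schur_mult ::
  "nat \<Rightarrow> nat \<Rightarrow> ((nat \<Rightarrow> nat) \<Rightarrow> real) \<Rightarrow> (nat \<Rightarrow> nat \<Rightarrow> nat \<Rightarrow> real) \<Rightarrow> nat \<Rightarrow> nat \<Rightarrow> real" where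
  "schur_mult d n m Y a b =
     (\<Sum>j\<in>multi_indices d n.
        if j 1 = a \<and> j (d+1) = b then m j * (\<Prod>k\<in>{1..d}. Y k (j k) (j (k+1))) else 0)"

definition mat_trace :: "nat \<Rightarrow> (nat \<Rightarrow> nat \<Rightarrow> real) \<Rightarrow> real" where
  "mat_trace n A = (\<Sum>a\<in>{1..n}. A a a)"

definition array_norm1 :: "nat \<Rightarrow> nat \<Rightarrow> ((nat \<Rightarrow> nat) \<Rightarrow> real) \<Rightarrow> real" where
  "array_norm1 d n m = (\<Sum>j\<in>multi_indices d n. \<bar>m j\<bar>)"

end

theory Submission
  imports Defs
begin

lemma pw: "(x::real) \<ge> 0 \<Longrightarrow> d \<ge> 1 \<Longrightarrow> (x powr (1/real d))^d = x"
  by (simp add: powr_inverse_root)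

lemma trace_bound:
  assumes "\<And>j. j \<in> multi_indices d n \<Longrightarrow> \<bar>m j * (\<Prod>k\<in>{1..d}. Y k (j k) (j (k+1)))\<bar> \<le> c j"
  shows "\<bar>mat_trace n (schur_mult d n m Y)\<bar> \<le> (\<Sum>j\<in>multi_indices d n. c j)"
proof -
  let ?g = "\<lambda>j. m j * (\<Prod>k\<in>{1..d}. Y k (j k) (j (k+1)))"
  have "mat_trace n (schur_mult d n m Y) =
     (\<Sum>j\<in>multi_indices d n. \<Sum>a\<in>{1..n}. if j 1 = a \<and> j (d+1) = a then ?g j else 0)"
    unfolding mat_trace_def schur_mult_def by (rule sum.swap)
  also have "\<dots> = (\<Sum>j\<in>multi_indices d n. if j 1 \<in> {1..n} \<and> j 1 = j (d+1) then ?g j else 0)"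
  proof (rule sum.cong[OF refl])
    fix j
    have "(\<Sum>a\<in>{1..n}. if j 1 = a \<and> j (d+1) = a then ?g j else 0)
        = (\<Sum>a\<in>{1..n}. if a = j 1 then (if j 1 = j (d+1) then ?g j else 0) else 0)"
      by (rule sum.cong) auto
    also have "\<dots> = (if j 1 \<in> {1..n} \<and> j 1 = j (d+1) then ?g j else 0)"
      by (simp add: sum.delta')
    finally show "(\<Sum>a\<in>{1..n}. if j 1 = a \<and> j (d+1) = a then ?g j else 0)
        = (if j 1 \<in> {1..n} \<and> j 1 = j (d+1) then ?g j else 0)" .
  qed
  finally have eq: "mat_trace n (schur_mult d n m Y) = (\<Sum>j\<in>multi_indices d n. if j 1 \<in> {1..n} \<and> j 1 = j (d+1) then ?g j else 0)" .
  have "\<bar>\<dots>\<bar> \<le> (\<Sum>j\<in>multi_indices d n. \<bar>if j 1 \<in> {1..n} \<and> j 1 = j (d+1) then ?g j else 0\<bar>)"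
    by (rule sum_abs)
  also have "\<dots> \<le> (\<Sum>j\<in>multi_indices d n. c j)"
  proof (rule sum_mono)
    fix j assume "j \<in> multi_indices d n"
    from assms[OF this] show "\<bar>if j 1 \<in> {1..n} \<and> j 1 = j (d+1) then ?g j else 0\<bar> \<le> c j"
      by auto
  qed
  finally show ?thesis using eq by simp
qed

theorem theorem5:
  fixes M :: "'a measure" and d n :: nat
    and m :: "(nat \<Rightarrow> nat) \<Rightarrow> real"
    and X :: "nat \<Rightarrow> 'a \<Rightarrow> nat \<Rightarrow> nat \<Rightarrow> real"
    and f :: "real \<Rightarrow> real" and t :: real
  assumes "prob_space M"
    and "d \<ge> 1" and "n \<ge> 1"
    and "\<exists>j\<in>multi_indices d n. m j \<noteq> 0"
    and "\<And>k i j. k \<in> {1..d} \<Longrightarrow> i \<in> {1..n} \<Longrightarrow> j \<in> {1..n} \<Longrightarrow>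
           (\<lambda>\<omega>. X k \<omega> i j) \<in> borel_measurable M"
    and "B_c f"
    and "\<And>u k i j. u \<ge> 0 \<Longrightarrow> k \<in> {1..d} \<Longrightarrow> i \<in> {1..n} \<Longrightarrow> j \<in> {1..n} \<Longrightarrow>
           measure M {\<omega> \<in> space M. \<bar>X k \<omega> i j\<bar> \<ge> u} \<le> f u"
    and "t \<ge> 0"
  shows "measure M {\<omega> \<in> space M.
            \<bar>mat_trace n (schur_mult d n m (\<lambda>k. X k \<omega>))\<bar> \<ge> t}
         \<le> real d * real n ^ 2 *
            f (t powr (1 / real d) / array_norm1 d n m powr (1 / real d))"
proof -
  interpret prob_space M by fact
  define N where "N = array_norm1 d n m"
  define s where "s = t powr (1 / real d) / N powr (1 / real d)"
  have finMI: "finite (multi_indices d n)" unfolding multi_indices_def by (simp add: finite_PiE)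
  obtain j0 where j0: "j0 \<in> multi_indices d n" "m j0 \<noteq> 0" using assms(4) by blast
  have Npos: "N > 0" unfolding N_def array_norm1_def
    by (rule sum_pos2[OF finMI j0(1)]) (use j0 in auto)
  have s0: "s \<ge> 0" unfolding s_def using Npos by simp
  have sd: "N * s ^ d = t"
    unfolding s_def power_divide using pw[OF assms(8) assms(2)] pw[of N d] Npos assms(2) by simp
  define I where "I = {1..d} \<times> {1..n} \<times> {1..n}"
  define A where "A = (\<lambda>(k,i,j). {\<omega> \<in> space M. \<bar>X k \<omega> i j\<bar> \<ge> s})"
  have finI: "finite I" unfolding I_def by simp
  have cardI: "card I = d * n ^ 2" unfolding I_def by (simp add: card_cartesian_product power2_eq_square)
  have Ameas: "A x \<in> sets M" if "x \<in> I" for x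
    using that assms(5) unfolding A_def I_def by auto
  have sub: "{\<omega> \<in> space M. \<bar>mat_trace n (schur_mult d n m (\<lambda>k. X k \<omega>))\<bar> \<ge> t} \<subseteq> (\<Union>x\<in>I. A x)"
  proof
    fix \<omega> assume w: "\<omega> \<in> {\<omega> \<in> space M. \<bar>mat_trace n (schur_mult d n m (\<lambda>k. X k \<omega>))\<bar> \<ge> t}"
    show "\<omega> \<in> (\<Union>x\<in>I. A x)"
    proof (rule ccontr)
      assume "\<omega> \<notin> (\<Union>x\<in>I. A x)"
      hence small: "\<And>k i j. k \<in> {1..d} \<Longrightarrow> i \<in> {1..n} \<Longrightarrow> j \<in> {1..n} \<Longrightarrow> \<bar>X k \<omega> i j\<bar> < s"
        using w unfolding A_def I_def by force
      have spos: "s > 0"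
        using small[of 1 1 1] assms(2,3) by force
      have idx: "j k \<in> {1..n}" if "j \<in> multi_indices d n" "k \<in> {1..d+1}" for j k
        using that unfolding multi_indices_def by (auto simp: PiE_def Pi_def)
      have pl: "(\<Prod>k\<in>{1..d}. \<bar>X k \<omega> (j k) (j (k+1))\<bar>) < s ^ d" if "j \<in> multi_indices d n" for j
      proof -
        have "(\<Prod>k\<in>{1..d}. \<bar>X k \<omega> (j k) (j (k+1))\<bar>) < (\<Prod>k\<in>{1..d}. s)"
          apply (rule prod_mono_strict[of 1])
          using assms(2) small idx[OF that] spos by (auto simp: less_imp_le)
        thus ?thesis by simp
      qed
      have "\<bar>mat_trace n (schur_mult d n m (\<lambda>k. X k \<omega>))\<bar> \<le> (\<Sum>j\<in>multi_indices d n. \<bar>m j\<bar> * (\<Prod>k\<in>{1..d}. \<bar>X k \<omega> (j k) (j (k+1))\<bar>))"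
        by (rule trace_bound) (simp add: abs_mult abs_prod)
      also have "\<dots> < (\<Sum>j\<in>multi_indices d n. \<bar>m j\<bar> * s ^ d)"
      proof (rule sum_strict_mono_ex1[OF finMI])
        show "\<forall>j\<in>multi_indices d n. \<bar>m j\<bar> * (\<Prod>k\<in>{1..d}. \<bar>X k \<omega> (j k) (j (k+1))\<bar>) \<le> \<bar>m j\<bar> * s ^ d"
          using pl by (meson abs_ge_zero less_imp_le mult_left_mono)
        show "\<exists>j\<in>multi_indices d n. \<bar>m j\<bar> * (\<Prod>k\<in>{1..d}. \<bar>X k \<omega> (j k) (j (k+1))\<bar>) < \<bar>m j\<bar> * s ^ d"
          using j0 pl[OF j0(1)] by (intro bexI[OF _ j0(1)]) simp
      qed
      also have "\<dots> = N * s ^ d" unfolding N_def array_norm1_def by (simp add: sum_distrib_right)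
      finally show False using sd w by simp
    qed
  qed
  have "measure M {\<omega> \<in> space M. \<bar>mat_trace n (schur_mult d n m (\<lambda>k. X k \<omega>))\<bar> \<ge> t} \<le> measure M (\<Union>x\<in>I. A x)"
    by (rule finite_measure_mono[OF sub]) (use finI Ameas in auto)
  also have "\<dots> \<le> (\<Sum>x\<in>I. measure M (A x))"
    by (rule finite_measure_subadditive_finite[OF finI]) (use Ameas in auto)
  also have "\<dots> \<le> (\<Sum>x\<in>I. f s)"
    by (rule sum_mono) (use assms(7)[OF s0] in \<open>auto simp: A_def I_def\<close>)
  also have "\<dots> = real d * real n ^ 2 * f s" using cardI by simp
  finally show ?thesis unfolding s_def N_def .
qed

end
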